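(* Let $n\ge 1$ and $\mathbb{T}=\mathbb{R}/2\pi\mathbb{Z}$. Let $G$ be the set of $2n\times 2n$ block matrices $$Q(A,B)=\begin{pmatrix} A & 0\\ B & (A^{T})^{-1}\end{pmatrix},$$ where $A\in \mathrm{GL}_n(\mathbb{Z})$ and $B$ is an $n\times n$ matrix with entries in $\mathbb{T}$ such that $A^{T}B$ is symmetric (as a $\mathbb{T}$-valued matrix), equipped with block matrix multiplication, i.e. $$Q(A_1,B_1)\,Q(A_2,B_2)=Q\big(A_1A_2,\; B_1A_2+(A_1^{T})^{-1}B_2\big),$$ with all entries of the lower-left block taken modulo $2\pi$. Then $G$ is a group; the subset $N=\{Q(I_n,C): C\in\mathbb{T}^{n\times n}\text{ symmetric}\}$ is a normal subgroup of $G$ isomorphic to $\mathrm{U}(1)^{n(n+1)/2}$; the subset $H=\{Q(A,0): A\in\mathrm{GL}_n(\mathbb{Z})\}$ is a subgroup isomorphic to $\mathrm{GL}_n(\mathbb{Z})$; every element of $G$ is a product of an element of $H$ and an element of $N$; and consequently $G\cong \mathrm{U}(1)^{n(n+1)/2}\rtimes \mathrm{GL}_n(\mathbb{Z})$.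
   Context: Products of an integer matrix with a $\mathbb{T}$-valued matrix (and sums of $\mathbb{T}$-valued matrices) are well defined modulo $2\pi$. The matrices $Q(A,B)$ are the "rotor symplectic transformations": they describe how $n$-rotor Clifford unitaries act by conjugation on rotor Pauli operators, where a Pauli string is represented by a vector $(\vec m\,|\,\vec\phi)\in\mathbb{Z}^n\times\mathbb{T}^n$ and the transformations must map such vectors to such vectors while preserving the symplectic form $(\vec m_u,\vec\phi_u),(\vec m_v,\vec\phi_v)\mapsto \vec m_u^{T}\vec\phi_v-\vec\phi_u^{T}\vec m_v \pmod{2\pi}$. $\mathrm{U}(1)^{n(n+1)/2}$ is identified with the additive group of symmetric $n\times n$ matrices over $\mathbb{T}$. *)

theory Defs
  imports "HOL-Analysis.Analysis" "HOL-Algebra.Algebra"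
begin

definition torus_rel :: "real \<Rightarrow> real \<Rightarrow> bool" where
  "torus_rel x y \<longleftrightarrow> (\<exists>k::int. x - y = 2 * pi * of_int k)"

lemma torus_rel_equivp: "equivp torus_rel"
proof (rule equivpI)
  show "reflp torus_rel" unfolding reflp_def torus_rel_def by (intro allI exI[of _ 0]) simp
  show "symp torus_rel" unfolding symp_def torus_rel_def
  proof (intro allI impI)
    fix x y assume "\<exists>k::int. x - y = 2 * pi * of_int k"
    then obtain k :: int where "x - y = 2 * pi * of_int k" by blast
    then have "y - x = 2 * pi * of_int (- k)" by simp
    then show "\<exists>k::int. y - x = 2 * pi * of_int k" by blast
  qed
  show "transp torus_rel" unfolding transp_def torus_rel_def
  proof (intro allI impI)
    fix x y z assume "\<exists>k::int. x - y = 2 * pi * of_int k" "\<exists>k::int. y - z = 2 * pi * of_int k"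
    then obtain k l :: int where "x - y = 2 * pi * of_int k" "y - z = 2 * pi * of_int l" by blast
    then have "x - z = 2 * pi * of_int (k + l)" by (simp add: algebra_simps)
    then show "\<exists>k::int. x - z = 2 * pi * of_int k" by blast
  qed
qed

quotient_type torus = real / torus_rel
  by (rule torus_rel_equivp)

instantiation torus :: ab_group_add
begin

lift_definition zero_torus :: torus is "0::real" .

lift_definition plus_torus :: "torus \<Rightarrow> torus \<Rightarrow> torus" is "(+)"
proof -
  fix x x' y y' :: real
  assume "torus_rel x x'" "torus_rel y y'"
  then obtain k l :: int where "x - x' = 2 * pi * of_int k" "y - y' = 2 * pi * of_int l"
    unfolding torus_rel_def by blast
  then have "x + y - (x' + y') = 2 * pi * of_int (k + l)" by (simp add: algebra_simps)
  then show "torus_rel (x + y) (x' + y')" unfolding torus_rel_def by blast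
qed

lift_definition uminus_torus :: "torus \<Rightarrow> torus" is uminus
proof -
  fix x x' :: real
  assume "torus_rel x x'"
  then obtain k :: int where "x - x' = 2 * pi * of_int k" unfolding torus_rel_def by blast
  then have "- x - (- x') = 2 * pi * of_int (- k)" by (simp add: algebra_simps)
  then show "torus_rel (- x) (- x')" unfolding torus_rel_def by blast
qed

definition minus_torus :: "torus \<Rightarrow> torus \<Rightarrow> torus" where
  "minus_torus a b = a + (- b)"

instance
proof
  fix a b c :: torus
  show "a + b + c = a + (b + c)" by transfer (simp add: add.assoc equivp_reflp[OF torus_rel_equivp])
  show "a + b = b + a" by transfer (simp add: add.commute equivp_reflp[OF torus_rel_equivp])
  show "0 + a = a" by transfer (simp add: equivp_reflp[OF torus_rel_equivp])
  show "- a + a = 0" by transfer (simp add: equivp_reflp[OF torus_rel_equivp])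
  show "a - b = a + - b" by (simp add: minus_torus_def)
qed

end

lift_definition tsmul :: "int \<Rightarrow> torus \<Rightarrow> torus" is "\<lambda>k x. of_int k * x"
proof -
  fix k :: int and x x' :: real
  assume "torus_rel x x'"
  then obtain m :: int where "x - x' = 2 * pi * of_int m" unfolding torus_rel_def by blast
  then have "of_int k * x - of_int k * x' = 2 * pi * of_int (k * m)"
    by (simp add: algebra_simps right_diff_distrib[symmetric])
  then show "torus_rel (of_int k * x) (of_int k * x')" unfolding torus_rel_def by blast
qed

definition imult :: "int^'n^'m \<Rightarrow> torus^'p^'n \<Rightarrow> torus^'p^'m" where
  "imult A B = (\<chi> i j. \<Sum>k\<in>UNIV. tsmul (A $ i $ k) (B $ k $ j))"

definition multi :: "torus^'n^'m \<Rightarrow> int^'p^'n \<Rightarrow> torus^'p^'m" where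
  "multi B A = (\<chi> i j. \<Sum>k\<in>UNIV. tsmul (A $ k $ j) (B $ i $ k))"

text \<open>The block matrix Q(A,B) = [[A, 0], [B, (A^T)^{-1}]] is determined by the pair (A,B);
  we represent Q(A,B) by the pair (A,B).\<close>

definition rotor_group :: "((int^'n^'n) \<times> (torus^'n^'n)) monoid" where
  "rotor_group =
    \<lparr> carrier = {(A, B). invertible A \<and> transpose (imult (transpose A) B) = imult (transpose A) B},
      mult = (\<lambda>(A1, B1) (A2, B2).
               (A1 ** A2, multi B1 A2 + imult (transpose (matrix_inv A1)) B2)),
      one = (mat 1, 0) \<rparr>"

definition N_set :: "((int^'n^'n) \<times> (torus^'n^'n)) set" where
  "N_set = {(mat 1, C) | C. transpose C = C}"

definition H_set :: "((int^'n^'n) \<times> (torus^'n^'n)) set" where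
  "H_set = {(A, 0) | A. invertible A}"

definition GLZ :: "(int^'n^'n) monoid" where
  "GLZ = \<lparr> carrier = {A. invertible A}, mult = (**), one = mat 1 \<rparr>"

text \<open>U(1)^{n(n+1)/2}, identified (as in the paper) with the additive group of
  symmetric n x n matrices over T.\<close>
definition U1_pow :: "(torus^'n^'n) monoid" where
  "U1_pow = \<lparr> carrier = {C. transpose C = C}, mult = (+), one = 0 \<rparr>"

text \<open>Action of GL_n(Z) on the symmetric T-matrices by conjugation inside G:
  Q(A,0) Q(I,C) Q(A,0)^{-1} = Q(I, (A^T)^{-1} C A^{-1}).\<close>
definition conj_action :: "int^'n^'n \<Rightarrow> torus^'n^'n \<Rightarrow> torus^'n^'n" where
  "conj_action A C = multi (imult (transpose (matrix_inv A)) C) (matrix_inv A)"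

definition semidirect_prod ::
  "('a, 'c) monoid_scheme \<Rightarrow> ('b, 'd) monoid_scheme \<Rightarrow> ('b \<Rightarrow> 'a \<Rightarrow> 'a) \<Rightarrow> ('a \<times> 'b) monoid" where
  "semidirect_prod N H phi =
    \<lparr> carrier = carrier N \<times> carrier H,
      mult = (\<lambda>(n1, h1) (n2, h2). (n1 \<otimes>\<^bsub>N\<^esub> phi h1 n2, h1 \<otimes>\<^bsub>H\<^esub> h2)),
      one = (\<one>\<^bsub>N\<^esub>, \<one>\<^bsub>H\<^esub>) \<rparr>"

end

theory Submission
  imports Defs
begin


lemma torus_refl: "torus_rel x x"
  by (rule equivp_reflp[OF torus_rel_equivp])

lemma tsmul_add_right: "tsmul k (x + y) = tsmul k x + tsmul k y"
  by transfer (simp add: distrib_left torus_refl)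
lemma tsmul_add_left: "tsmul (k + l) x = tsmul k x + tsmul l x"
  by transfer (simp add: distrib_right torus_refl)
lemma tsmul_mult: "tsmul (k * l) x = tsmul k (tsmul l x)"
  by transfer (simp add: mult.assoc torus_refl)
lemma tsmul_one[simp]: "tsmul 1 x = x"
  by transfer (simp add: torus_refl)
lemma tsmul_zero_left[simp]: "tsmul 0 x = 0"
  by transfer (simp add: torus_refl)
lemma tsmul_zero_right[simp]: "tsmul k 0 = 0"
  by transfer (simp add: torus_refl)
lemma tsmul_minus_right: "tsmul k (- x) = - tsmul k x"
  by transfer (simp add: torus_refl)
lemma tsmul_sum_right: "tsmul k (sum f S) = (\<Sum>i\<in>S. tsmul k (f i))"
  by (induction S rule: infinite_finite_induct) (auto simp: tsmul_add_right)
lemma tsmul_sum_left: "tsmul (sum f S) x = (\<Sum>i\<in>S. tsmul (f i) x)"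
  by (induction S rule: infinite_finite_induct) (auto simp: tsmul_add_left)

lemma imult_imult: "imult A (imult B C) = imult (A ** B) C"
proof -
  have "(\<Sum>k\<in>UNIV. tsmul (A $ i $ k) (\<Sum>l\<in>UNIV. tsmul (B $ k $ l) (C $ l $ j)))
      = (\<Sum>l\<in>UNIV. tsmul (\<Sum>k\<in>UNIV. A $ i $ k * B $ k $ l) (C $ l $ j))" for i j
  proof -
    have "(\<Sum>k\<in>UNIV. tsmul (A $ i $ k) (\<Sum>l\<in>UNIV. tsmul (B $ k $ l) (C $ l $ j)))
       = (\<Sum>k\<in>UNIV. \<Sum>l\<in>UNIV. tsmul (A $ i $ k * B $ k $ l) (C $ l $ j))"
      by (simp only: tsmul_sum_right tsmul_mult)
    also have "\<dots> = (\<Sum>l\<in>UNIV. \<Sum>k\<in>UNIV. tsmul (A $ i $ k * B $ k $ l) (C $ l $ j))"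
      by (rule sum.swap)
    also have "\<dots> = (\<Sum>l\<in>UNIV. tsmul (\<Sum>k\<in>UNIV. A $ i $ k * B $ k $ l) (C $ l $ j))"
      by (simp only: tsmul_sum_left)
    finally show ?thesis .
  qed
  then show ?thesis unfolding imult_def matrix_matrix_mult_def by (simp add: vec_eq_iff)
qed

lemma multi_multi: "multi (multi C A) B = multi C (A ** B)"
proof -
  have "(\<Sum>k\<in>UNIV. tsmul (B $ k $ j) (\<Sum>l\<in>UNIV. tsmul (A $ l $ k) (C $ i $ l)))
      = (\<Sum>l\<in>UNIV. tsmul (\<Sum>k\<in>UNIV. A $ l $ k * B $ k $ j) (C $ i $ l))" for i j
  proof -
    have "(\<Sum>k\<in>UNIV. tsmul (B $ k $ j) (\<Sum>l\<in>UNIV. tsmul (A $ l $ k) (C $ i $ l)))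
       = (\<Sum>k\<in>UNIV. \<Sum>l\<in>UNIV. tsmul (B $ k $ j * A $ l $ k) (C $ i $ l))"
      by (simp only: tsmul_sum_right tsmul_mult)
    also have "\<dots> = (\<Sum>l\<in>UNIV. \<Sum>k\<in>UNIV. tsmul (A $ l $ k * B $ k $ j) (C $ i $ l))"
      by (subst sum.swap) (simp only: mult.commute)
    also have "\<dots> = (\<Sum>l\<in>UNIV. tsmul (\<Sum>k\<in>UNIV. A $ l $ k * B $ k $ j) (C $ i $ l))"
      by (simp only: tsmul_sum_left)
    finally show ?thesis .
  qed
  then show ?thesis unfolding multi_def matrix_matrix_mult_def by (simp add: vec_eq_iff)
qed

lemma multi_imult: "multi (imult A C) B = imult A (multi C B)"
proof -
  have "(\<Sum>k\<in>UNIV. tsmul (B $ k $ j) (\<Sum>l\<in>UNIV. tsmul (A $ i $ l) (C $ l $ k)))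
      = (\<Sum>l\<in>UNIV. tsmul (A $ i $ l) (\<Sum>k\<in>UNIV. tsmul (B $ k $ j) (C $ l $ k)))" for i j
  proof -
    have "(\<Sum>k\<in>UNIV. tsmul (B $ k $ j) (\<Sum>l\<in>UNIV. tsmul (A $ i $ l) (C $ l $ k)))
       = (\<Sum>k\<in>UNIV. \<Sum>l\<in>UNIV. tsmul (B $ k $ j * A $ i $ l) (C $ l $ k))"
      by (simp only: tsmul_sum_right tsmul_mult)
    also have "\<dots> = (\<Sum>l\<in>UNIV. \<Sum>k\<in>UNIV. tsmul (A $ i $ l * B $ k $ j) (C $ l $ k))"
      by (subst sum.swap) (simp only: mult.commute)
    also have "\<dots> = (\<Sum>l\<in>UNIV. tsmul (A $ i $ l) (\<Sum>k\<in>UNIV. tsmul (B $ k $ j) (C $ l $ k)))"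
      by (simp only: tsmul_sum_right tsmul_mult)
    finally show ?thesis .
  qed
  then show ?thesis unfolding multi_def imult_def by (simp add: vec_eq_iff)
qed

lemma transpose_imult: "transpose (imult A C) = multi (transpose C) (transpose A)"
  unfolding multi_def imult_def transpose_def by (simp add: vec_eq_iff)

lemma transpose_multi: "transpose (multi C A) = imult (transpose A) (transpose C)"
  unfolding multi_def imult_def transpose_def by (simp add: vec_eq_iff)

lemma tsmul_if01: "tsmul (if P then 1 else 0) x = (if P then x else 0)"
  by simp

lemma imult_id[simp]: "imult (mat 1) C = C"
  unfolding imult_def mat_def by (simp add: vec_eq_iff tsmul_if01)

lemma multi_id[simp]: "multi C (mat 1) = C"
  unfolding multi_def mat_def by (simp add: vec_eq_iff tsmul_if01)

lemma imult_add: "imult A (C + D) = imult A C + imult A D"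
  unfolding imult_def by (simp add: vec_eq_iff tsmul_add_right sum.distrib)
lemma multi_add: "multi (C + D) A = multi C A + multi D A"
  unfolding multi_def by (simp add: vec_eq_iff tsmul_add_right sum.distrib)
lemma imult_zero[simp]: "imult A 0 = 0"
  unfolding imult_def by (simp add: vec_eq_iff)
lemma multi_zero[simp]: "multi 0 A = 0"
  unfolding multi_def by (simp add: vec_eq_iff)
lemma imult_uminus: "imult A (- C) = - imult A C"
  unfolding imult_def by (simp add: vec_eq_iff tsmul_minus_right sum_negf)
lemma multi_uminus: "multi (- C) A = - multi C A"
  unfolding multi_def by (simp add: vec_eq_iff tsmul_minus_right sum_negf)


lemma transpose_add_t: "transpose (C + D) = transpose C + transpose (D::'a::ab_group_add^'n^'m)"
  unfolding transpose_def by (simp add: vec_eq_iff)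
lemma transpose_uminus_t: "transpose (- C) = - transpose (C::'a::ab_group_add^'n^'m)"
  unfolding transpose_def by (simp add: vec_eq_iff)
lemma transpose_zero_t[simp]: "transpose (0::'a::ab_group_add^'n^'m) = 0"
  unfolding transpose_def by (simp add: vec_eq_iff)

section \<open>Integer matrices\<close>

lemma inv_r: "invertible (A::int^'n^'n) \<Longrightarrow> A ** matrix_inv A = mat 1"
  unfolding invertible_def matrix_inv_def by (rule someI_ex[THEN conjunct1])
lemma inv_l: "invertible (A::int^'n^'n) \<Longrightarrow> matrix_inv A ** A = mat 1"
  unfolding invertible_def matrix_inv_def by (rule someI_ex[THEN conjunct2])

lemma inv_unique:
  fixes A Y :: "int^'n^'n"
  assumes "A ** Y = mat 1" "Y ** A = mat 1"
  shows "matrix_inv A = Y"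
proof -
  have invA: "invertible A" using assms unfolding invertible_def by blast
  have "matrix_inv A = matrix_inv A ** (A ** Y)" using assms by simp
  also have "\<dots> = (matrix_inv A ** A) ** Y" by (simp add: matrix_mul_assoc)
  also have "\<dots> = Y" using inv_l[OF invA] by simp
  finally show ?thesis .
qed

lemma invertible_inv: "invertible (A::int^'n^'n) \<Longrightarrow> invertible (matrix_inv A)"
  unfolding invertible_def using inv_l inv_r invertible_def by blast

lemma inv_inv: "invertible (A::int^'n^'n) \<Longrightarrow> matrix_inv (matrix_inv A) = A"
  by (rule inv_unique) (simp_all add: inv_l inv_r)

lemma inv_one: "matrix_inv (mat 1 :: int^'n^'n) = mat 1"
  by (rule inv_unique) simp_all

lemma inv_mult:
  fixes A B :: "int^'n^'n"
  assumes "invertible A" "invertible B"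
  shows "matrix_inv (A ** B) = matrix_inv B ** matrix_inv A"
proof (rule inv_unique)
  have "A ** B ** (matrix_inv B ** matrix_inv A) = A ** (B ** matrix_inv B) ** matrix_inv A"
    by (simp add: matrix_mul_assoc)
  then show "A ** B ** (matrix_inv B ** matrix_inv A) = mat 1" using assms by (simp add: inv_r)
  have "matrix_inv B ** matrix_inv A ** (A ** B) = matrix_inv B ** (matrix_inv A ** A) ** B"
    by (simp add: matrix_mul_assoc)
  then show "matrix_inv B ** matrix_inv A ** (A ** B) = mat 1" using assms by (simp add: inv_l)
qed

lemma tinv_l: "invertible (A::int^'n^'n) \<Longrightarrow> transpose (matrix_inv A) ** transpose A = mat 1"
  by (metis inv_r matrix_transpose_mul transpose_mat)
lemma tinv_r: "invertible (A::int^'n^'n) \<Longrightarrow> transpose A ** transpose (matrix_inv A) = mat 1"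
  by (metis inv_l matrix_transpose_mul transpose_mat)

lemma imult_cancel1: "invertible (A::int^'n^'n) \<Longrightarrow> imult (transpose (matrix_inv A)) (imult (transpose A) B) = B"
  by (simp add: imult_imult tinv_l)
lemma imult_cancel2: "invertible (A::int^'n^'n) \<Longrightarrow> imult (transpose A) (imult (transpose (matrix_inv A)) B) = B"
  by (simp add: imult_imult tinv_r)
lemma multi_cancel1: "invertible (A::int^'n^'n) \<Longrightarrow> multi (multi B A) (matrix_inv A) = B"
  by (simp add: multi_multi inv_r)
lemma multi_cancel2: "invertible (A::int^'n^'n) \<Longrightarrow> multi (multi B (matrix_inv A)) A = B"
  by (simp add: multi_multi inv_l)

lemma sym_BAi:
  fixes A :: "int^'n^'n" and B :: "torus^'n^'n"
  assumes A: "invertible A" and S: "transpose (imult (transpose A) B) = imult (transpose A) B"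
  shows "transpose (multi B (matrix_inv A)) = multi B (matrix_inv A)"
proof -
  have e: "multi (transpose B) A = imult (transpose A) B"
    using S by (simp add: transpose_imult)
  have "multi B (matrix_inv A) = imult (transpose (matrix_inv A)) (multi (imult (transpose A) B) (matrix_inv A))"
    using A by (simp add: multi_imult[symmetric] imult_cancel1)
  also have "\<dots> = imult (transpose (matrix_inv A)) (multi (multi (transpose B) A) (matrix_inv A))"
    by (simp add: e)
  also have "\<dots> = imult (transpose (matrix_inv A)) (transpose B)"
    using A by (simp add: multi_cancel1)
  finally have eq: "multi B (matrix_inv A) = imult (transpose (matrix_inv A)) (transpose B)" .
  show ?thesis by (subst transpose_multi) (rule eq[symmetric])
qed


section \<open>The group\<close>

abbreviation symt :: "torus^'n^'n \<Rightarrow> bool" where "symt C \<equiv> transpose C = C"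

lemma rotor_carrier: "((A, B) \<in> carrier rotor_group) \<longleftrightarrow> invertible A \<and> symt (imult (transpose A) B)"
  unfolding rotor_group_def by simp
lemma rotor_mult: "(A1, B1) \<otimes>\<^bsub>rotor_group\<^esub> (A2, B2) = (A1 ** A2, multi B1 A2 + imult (transpose (matrix_inv A1)) B2)"
  unfolding rotor_group_def by simp
lemma rotor_one: "\<one>\<^bsub>rotor_group\<^esub> = (mat 1, 0)"
  unfolding rotor_group_def by simp

lemma invertible_one: "invertible (mat 1 :: int^'n^'n)"
  unfolding invertible_def by (intro exI[of _ "mat 1"]) simp

lemma sym_closed:
  fixes A1 A2 :: "int^'n^'n" and B1 B2 :: "torus^'n^'n"
  assumes A1: "invertible A1" and A2: "invertible A2"
    and S1: "symt (imult (transpose A1) B1)" and S2: "symt (imult (transpose A2) B2)"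
  shows "symt (imult (transpose (A1 ** A2)) (multi B1 A2 + imult (transpose (matrix_inv A1)) B2))"
proof -
  define S where "S = imult (transpose A1) B1"
  have SS: "transpose S = S" using S1 S_def by simp
  have "imult (transpose (A1 ** A2)) (multi B1 A2 + imult (transpose (matrix_inv A1)) B2)
      = multi (imult (transpose A2) S) A2 + imult (transpose A2) B2"
    using A1 unfolding S_def
    by (simp add: matrix_transpose_mul imult_add imult_imult[symmetric] multi_imult[symmetric] imult_cancel2)
  moreover have "transpose (multi (imult (transpose A2) S) A2) = multi (imult (transpose A2) S) A2"
  proof -
    have "transpose (multi (imult (transpose A2) S) A2) = imult (transpose A2) (transpose (imult (transpose A2) S))"
      by (rule transpose_multi)
    also have "\<dots> = imult (transpose A2) (multi S A2)"
      by (simp add: transpose_imult SS)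
    also have "\<dots> = multi (imult (transpose A2) S) A2" by (simp add: multi_imult)
    finally show ?thesis .
  qed
  ultimately show ?thesis using S2 by (simp add: transpose_add_t)
qed

lemma rotor_group_is_group: "group (rotor_group :: ((int^'n^'n) \<times> (torus^'n^'n)) monoid)"
proof (rule groupI)
  fix x y :: "(int^'n^'n) \<times> (torus^'n^'n)"
  assume x: "x \<in> carrier rotor_group" and y: "y \<in> carrier rotor_group"
  obtain A1 B1 where x': "x = (A1, B1)" by (cases x)
  obtain A2 B2 where y': "y = (A2, B2)" by (cases y)
  show "x \<otimes>\<^bsub>rotor_group\<^esub> y \<in> carrier rotor_group"
    using x y unfolding x' y' rotor_mult rotor_carrier
    by (simp add: invertible_mult sym_closed)
next
  show "\<one>\<^bsub>rotor_group\<^esub> \<in> carrier (rotor_group :: ((int^'n^'n) \<times> (torus^'n^'n)) monoid)"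
    unfolding rotor_one rotor_carrier by (simp add: invertible_one)
next
  fix x y z :: "(int^'n^'n) \<times> (torus^'n^'n)"
  assume x: "x \<in> carrier rotor_group" and y: "y \<in> carrier rotor_group" and z: "z \<in> carrier rotor_group"
  obtain A1 B1 where x': "x = (A1, B1)" by (cases x)
  obtain A2 B2 where y': "y = (A2, B2)" by (cases y)
  obtain A3 B3 where z': "z = (A3, B3)" by (cases z)
  have A1: "invertible A1" and A2: "invertible A2" using x y x' y' rotor_carrier by auto
  show "x \<otimes>\<^bsub>rotor_group\<^esub> y \<otimes>\<^bsub>rotor_group\<^esub> z = x \<otimes>\<^bsub>rotor_group\<^esub> (y \<otimes>\<^bsub>rotor_group\<^esub> z)"
    unfolding x' y' z' rotor_mult
    using A1 A2
    by (simp add: matrix_mul_assoc inv_mult matrix_transpose_mul multi_add imult_add multi_multi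
        multi_imult imult_imult add.assoc)
next
  fix x :: "(int^'n^'n) \<times> (torus^'n^'n)"
  assume x: "x \<in> carrier rotor_group"
  obtain A B where x': "x = (A, B)" by (cases x)
  show "\<one>\<^bsub>rotor_group\<^esub> \<otimes>\<^bsub>rotor_group\<^esub> x = x"
    unfolding x' rotor_one rotor_mult by (simp add: inv_one)
next
  fix x :: "(int^'n^'n) \<times> (torus^'n^'n)"
  assume x: "x \<in> carrier rotor_group"
  obtain A B where x': "x = (A, B)" by (cases x)
  have A: "invertible A" and S: "symt (imult (transpose A) B)" using x x' rotor_carrier by auto
  define y where "y = (matrix_inv A, - multi (imult (transpose A) B) (matrix_inv A))"
  have "y \<otimes>\<^bsub>rotor_group\<^esub> x = \<one>\<^bsub>rotor_group\<^esub>"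
    unfolding y_def x' rotor_mult rotor_one
    using A by (simp add: inv_l inv_inv multi_uminus multi_cancel2)
  moreover have "y \<in> carrier rotor_group"
  proof -
    have "imult (transpose (matrix_inv A)) (- multi (imult (transpose A) B) (matrix_inv A))
        = - multi B (matrix_inv A)"
      using A by (simp add: imult_uminus multi_imult[symmetric] imult_cancel1)
    then show ?thesis
      unfolding y_def rotor_carrier using sym_BAi[OF A S] A
      by (simp add: invertible_inv transpose_uminus_t)
  qed
  ultimately show "\<exists>y\<in>carrier rotor_group. y \<otimes>\<^bsub>rotor_group\<^esub> x = \<one>\<^bsub>rotor_group\<^esub>" by blast
qed

lemma rotor_inv:
  assumes "(A, B) \<in> carrier (rotor_group :: ((int^'n^'n) \<times> (torus^'n^'n)) monoid)"
  shows "inv\<^bsub>rotor_group\<^esub> (A, B) = (matrix_inv A, - multi (imult (transpose A) B) (matrix_inv A))"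
proof -
  have A: "invertible A" and S: "symt (imult (transpose A) B)" using assms rotor_carrier by auto
  define y where "y = (matrix_inv A, - multi (imult (transpose A) B) (matrix_inv A))"
  have "y \<otimes>\<^bsub>rotor_group\<^esub> (A, B) = \<one>\<^bsub>rotor_group\<^esub>"
    unfolding y_def rotor_mult rotor_one
    using A by (simp add: inv_l inv_inv multi_uminus multi_cancel2)
  moreover have "y \<in> carrier rotor_group"
  proof -
    have "imult (transpose (matrix_inv A)) (- multi (imult (transpose A) B) (matrix_inv A))
        = - multi B (matrix_inv A)"
      using A by (simp add: imult_uminus multi_imult[symmetric] imult_cancel1)
    then show ?thesis
      unfolding y_def rotor_carrier using sym_BAi[OF A S] A
      by (simp add: invertible_inv transpose_uminus_t)
  qed
  ultimately show ?thesis unfolding y_def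
    using group.inv_equality[OF rotor_group_is_group] assms by blast
qed


lemma GLZ_group: "group (GLZ :: (int^'n^'n) monoid)"
proof (rule groupI)
  fix x :: "int^'n^'n"
  assume x: "x \<in> carrier GLZ"
  then show "\<exists>y\<in>carrier GLZ. y \<otimes>\<^bsub>GLZ\<^esub> x = \<one>\<^bsub>GLZ\<^esub>"
    unfolding GLZ_def by (intro bexI[of _ "matrix_inv x"]) (simp_all add: inv_l invertible_inv)
qed (auto simp: GLZ_def invertible_mult invertible_one matrix_mul_assoc)

lemma U1_group: "group (U1_pow :: (torus^'n^'n) monoid)"
proof (rule groupI)
  fix x :: "torus^'n^'n"
  assume x: "x \<in> carrier U1_pow"
  then show "\<exists>y\<in>carrier U1_pow. y \<otimes>\<^bsub>U1_pow\<^esub> x = \<one>\<^bsub>U1_pow\<^esub>"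
    unfolding U1_pow_def by (intro bexI[of _ "- x"]) (simp_all add: transpose_uminus_t)
qed (auto simp: U1_pow_def transpose_add_t add.assoc)

lemma fst_hom: "fst \<in> hom (rotor_group :: ((int^'n^'n) \<times> (torus^'n^'n)) monoid) GLZ"
proof (rule homI)
  fix x :: "(int^'n^'n) \<times> (torus^'n^'n)"
  assume "x \<in> carrier rotor_group"
  then show "fst x \<in> carrier GLZ" unfolding GLZ_def by (cases x) (simp add: rotor_carrier)
next
  fix x y :: "(int^'n^'n) \<times> (torus^'n^'n)"
  show "fst (x \<otimes>\<^bsub>rotor_group\<^esub> y) = fst x \<otimes>\<^bsub>GLZ\<^esub> fst y"
    unfolding GLZ_def by (cases x, cases y) (simp add: rotor_mult)
qed

lemma kernel_N: "kernel (rotor_group :: ((int^'n^'n) \<times> (torus^'n^'n)) monoid) GLZ fst = N_set"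
  unfolding kernel_def N_set_def GLZ_def
  by (auto simp: rotor_carrier invertible_one)

lemma N_normal: "N_set \<lhd> (rotor_group :: ((int^'n^'n) \<times> (torus^'n^'n)) monoid)"
proof -
  interpret group_hom "rotor_group :: ((int^'n^'n) \<times> (torus^'n^'n)) monoid" GLZ fst
    by (intro group_hom.intro group_hom_axioms.intro rotor_group_is_group GLZ_group fst_hom)
  show ?thesis using normal_kernel by (simp only: kernel_N)
qed

lemma N_iso: "(rotor_group :: ((int^'n^'n) \<times> (torus^'n^'n)) monoid)\<lparr>carrier := N_set\<rparr> \<cong> (U1_pow :: (torus^'n^'n) monoid)"
proof (rule is_isoI)
  show "snd \<in> iso ((rotor_group :: ((int^'n^'n) \<times> (torus^'n^'n)) monoid)\<lparr>carrier := N_set\<rparr>) U1_pow"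
    unfolding iso_def
  proof (intro CollectI conjI)
    show "snd \<in> hom ((rotor_group :: ((int^'n^'n) \<times> (torus^'n^'n)) monoid)\<lparr>carrier := N_set\<rparr>) U1_pow"
      by (rule homI) (auto simp: N_set_def U1_pow_def rotor_mult inv_one)
    show "bij_betw snd (carrier ((rotor_group :: ((int^'n^'n) \<times> (torus^'n^'n)) monoid)\<lparr>carrier := N_set\<rparr>)) (carrier U1_pow)"
      unfolding bij_betw_def inj_on_def N_set_def U1_pow_def by (auto simp: image_iff)
  qed
qed

lemma H_subgroup: "subgroup H_set (rotor_group :: ((int^'n^'n) \<times> (torus^'n^'n)) monoid)"
proof (rule subgroup.intro)
  show "H_set \<subseteq> carrier (rotor_group :: ((int^'n^'n) \<times> (torus^'n^'n)) monoid)"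
    unfolding H_set_def by (auto simp: rotor_carrier)
  show "\<one>\<^bsub>rotor_group\<^esub> \<in> (H_set :: ((int^'n^'n) \<times> (torus^'n^'n)) set)"
    unfolding H_set_def rotor_one by (auto simp: invertible_one)
  fix x y :: "(int^'n^'n) \<times> (torus^'n^'n)"
  assume x: "x \<in> H_set"
  then obtain A where A: "x = (A, 0)" "invertible A" unfolding H_set_def by auto
  have cA: "(A, 0) \<in> carrier rotor_group" using A(2) by (simp add: rotor_carrier)
  have "inv\<^bsub>rotor_group\<^esub> x = (matrix_inv A, 0)" using rotor_inv[OF cA] A(1) by simp
  then show "inv\<^bsub>rotor_group\<^esub> x \<in> H_set"
    using A unfolding H_set_def by (auto simp: invertible_inv)
  assume y: "y \<in> H_set"
  then obtain B where B: "y = (B, 0)" "invertible B" unfolding H_set_def by auto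
  show "x \<otimes>\<^bsub>rotor_group\<^esub> y \<in> H_set"
    using A B unfolding H_set_def by (auto simp: rotor_mult invertible_mult)
qed

lemma H_iso: "(rotor_group :: ((int^'n^'n) \<times> (torus^'n^'n)) monoid)\<lparr>carrier := H_set\<rparr> \<cong> (GLZ :: (int^'n^'n) monoid)"
proof (rule is_isoI)
  show "fst \<in> iso ((rotor_group :: ((int^'n^'n) \<times> (torus^'n^'n)) monoid)\<lparr>carrier := H_set\<rparr>) GLZ"
    unfolding iso_def
  proof (intro CollectI conjI)
    show "fst \<in> hom ((rotor_group :: ((int^'n^'n) \<times> (torus^'n^'n)) monoid)\<lparr>carrier := H_set\<rparr>) GLZ"
      by (rule homI) (auto simp: H_set_def GLZ_def rotor_mult)
    show "bij_betw fst (carrier ((rotor_group :: ((int^'n^'n) \<times> (torus^'n^'n)) monoid)\<lparr>carrier := H_set\<rparr>)) (carrier GLZ)"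
      unfolding bij_betw_def inj_on_def H_set_def GLZ_def by (auto simp: image_iff)
  qed
qed

lemma HN: "carrier (rotor_group :: ((int^'n^'n) \<times> (torus^'n^'n)) monoid) = H_set <#>\<^bsub>rotor_group\<^esub> N_set"
proof
  show "H_set <#>\<^bsub>rotor_group\<^esub> N_set \<subseteq> carrier (rotor_group :: ((int^'n^'n) \<times> (torus^'n^'n)) monoid)"
    using subgroup.subset[OF H_subgroup] normal_imp_subgroup[OF N_normal, THEN subgroup.subset]
      monoid.m_closed[OF group.is_monoid[OF rotor_group_is_group]]
    unfolding set_mult_def by blast
next
  show "carrier (rotor_group :: ((int^'n^'n) \<times> (torus^'n^'n)) monoid) \<subseteq> H_set <#>\<^bsub>rotor_group\<^esub> N_set"
  proof
    fix x :: "(int^'n^'n) \<times> (torus^'n^'n)"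
    assume x: "x \<in> carrier rotor_group"
    obtain A B where x': "x = (A, B)" by (cases x)
    have A: "invertible A" and S: "symt (imult (transpose A) B)" using x x' rotor_carrier by auto
    have "x = (A, 0) \<otimes>\<^bsub>rotor_group\<^esub> (mat 1, imult (transpose A) B)"
      using A by (simp add: x' rotor_mult imult_cancel1)
    moreover have "(A, 0) \<in> H_set" using A unfolding H_set_def by auto
    moreover have "(mat 1, imult (transpose A) B) \<in> N_set" using S unfolding N_set_def by auto
    ultimately show "x \<in> H_set <#>\<^bsub>rotor_group\<^esub> N_set" unfolding set_mult_def by blast
  qed
qed


section \<open>Action and semidirect product\<close>

lemma conj_sym: "symt C \<Longrightarrow> symt (conj_action A C)"
proof -
  assume C: "symt C"
  have "transpose (conj_action A C) = imult (transpose (matrix_inv A)) (transpose (imult (transpose (matrix_inv A)) C))"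
    unfolding conj_action_def by (rule transpose_multi)
  also have "\<dots> = imult (transpose (matrix_inv A)) (multi C (matrix_inv A))"
    by (simp add: transpose_imult C)
  also have "\<dots> = conj_action A C" unfolding conj_action_def by (simp add: multi_imult)
  finally show ?thesis .
qed

lemma conj_add: "conj_action A (C + D) = conj_action A C + conj_action A D"
  unfolding conj_action_def by (simp add: imult_add multi_add)

lemma conj_comp:
  assumes "invertible A1" "invertible A2"
  shows "conj_action (A1 ** A2) C = conj_action A1 (conj_action A2 C)"
  unfolding conj_action_def using assms
  by (simp add: inv_mult matrix_transpose_mul imult_imult[symmetric] multi_multi[symmetric] multi_imult)

lemma conj_one: "conj_action (mat 1) C = C"
  unfolding conj_action_def by (simp add: inv_one)

lemma conj_auto:
  assumes A: "invertible (A::int^'n^'n)"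
  shows "(\<lambda>C\<in>carrier U1_pow. conj_action A C) \<in> auto (U1_pow :: (torus^'n^'n) monoid)"
proof -
  let ?S = "carrier (U1_pow :: (torus^'n^'n) monoid)"
  have Ai: "invertible (matrix_inv A)" using A by (rule invertible_inv)
  have hom: "(\<lambda>C\<in>?S. conj_action A C) \<in> hom U1_pow U1_pow"
    by (rule homI) (auto simp: U1_pow_def conj_sym conj_add transpose_add_t)
  have "bij_betw (\<lambda>C\<in>?S. conj_action A C) ?S ?S"
  proof (rule bij_betw_byWitness[where f' = "conj_action (matrix_inv A)"])
    show "\<forall>a\<in>?S. conj_action (matrix_inv A) ((\<lambda>C\<in>?S. conj_action A C) a) = a"
      using A Ai by (simp add: conj_comp[symmetric] inv_l conj_one)
    show "\<forall>a\<in>?S. (\<lambda>C\<in>?S. conj_action A C) (conj_action (matrix_inv A) a) = a"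
      using A Ai by (auto simp: conj_comp[symmetric] inv_r conj_one U1_pow_def conj_sym)
    show "(\<lambda>C\<in>?S. conj_action A C) ` ?S \<subseteq> ?S"
      by (auto simp: U1_pow_def conj_sym)
    show "conj_action (matrix_inv A) ` ?S \<subseteq> ?S"
      by (auto simp: U1_pow_def conj_sym)
  qed
  then show ?thesis using hom unfolding auto_def Bij_def by auto
qed

lemma conj_hom:
  "(\<lambda>A\<in>carrier GLZ. \<lambda>C\<in>carrier U1_pow. conj_action A C)
     \<in> hom (GLZ :: (int^'n^'n) monoid) (AutoGroup (U1_pow :: (torus^'n^'n) monoid))"
proof (rule homI)
  fix A :: "int^'n^'n"
  assume "A \<in> carrier GLZ"
  then show "(\<lambda>A\<in>carrier GLZ. \<lambda>C\<in>carrier U1_pow. conj_action A C) A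
      \<in> carrier (AutoGroup (U1_pow :: (torus^'n^'n) monoid))"
    using conj_auto unfolding AutoGroup_def GLZ_def by simp
next
  fix A1 A2 :: "int^'n^'n"
  assume A1: "A1 \<in> carrier GLZ" and A2: "A2 \<in> carrier GLZ"
  let ?S = "carrier (U1_pow :: (torus^'n^'n) monoid)"
  have i1: "invertible A1" and i2: "invertible A2" using A1 A2 unfolding GLZ_def by auto
  have b1: "(\<lambda>C\<in>?S. conj_action A1 C) \<in> Bij ?S" and b2: "(\<lambda>C\<in>?S. conj_action A2 C) \<in> Bij ?S"
    using conj_auto[OF i1] conj_auto[OF i2] unfolding auto_def by auto
  have "(\<lambda>C\<in>?S. conj_action (A1 ** A2) C) = compose ?S (\<lambda>C\<in>?S. conj_action A1 C) (\<lambda>C\<in>?S. conj_action A2 C)"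
    unfolding compose_def
    by (rule restrict_ext) (auto simp: conj_comp i1 i2 U1_pow_def conj_sym)
  then show "(\<lambda>A\<in>carrier GLZ. \<lambda>C\<in>?S. conj_action A C) (A1 \<otimes>\<^bsub>GLZ\<^esub> A2) =
       (\<lambda>A\<in>carrier GLZ. \<lambda>C\<in>?S. conj_action A C) A1 \<otimes>\<^bsub>AutoGroup U1_pow\<^esub>
       (\<lambda>A\<in>carrier GLZ. \<lambda>C\<in>?S. conj_action A C) A2"
    using A1 A2 b1 b2 i1 i2 unfolding AutoGroup_def BijGroup_def
    by (simp add: GLZ_def invertible_mult)
qed

lemma semi_iso:
  "(rotor_group :: ((int^'n^'n) \<times> (torus^'n^'n)) monoid)
     \<cong> semidirect_prod (U1_pow :: (torus^'n^'n) monoid) (GLZ :: (int^'n^'n) monoid) conj_action"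
proof (rule is_isoI)
  let ?G = "rotor_group :: ((int^'n^'n) \<times> (torus^'n^'n)) monoid"
  let ?P = "semidirect_prod (U1_pow :: (torus^'n^'n) monoid) (GLZ :: (int^'n^'n) monoid) conj_action"
  let ?f = "\<lambda>(A, B). (multi B (matrix_inv A), A)"
  have hom: "?f \<in> hom ?G ?P"
  proof (rule homI)
    fix x assume x: "x \<in> carrier ?G"
    obtain A B where x': "x = (A, B)" by (cases x)
    have A: "invertible A" and S: "symt (imult (transpose A) B)" using x x' rotor_carrier by auto
    show "?f x \<in> carrier ?P"
      using sym_BAi[OF A S] A unfolding x' semidirect_prod_def U1_pow_def GLZ_def by simp
  next
    fix x y assume x: "x \<in> carrier ?G" and y: "y \<in> carrier ?G"
    obtain A1 B1 where x': "x = (A1, B1)" by (cases x)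
    obtain A2 B2 where y': "y = (A2, B2)" by (cases y)
    have A1: "invertible A1" and A2: "invertible A2" using x y x' y' rotor_carrier by auto
    show "?f (x \<otimes>\<^bsub>?G\<^esub> y) = ?f x \<otimes>\<^bsub>?P\<^esub> ?f y"
      unfolding x' y' rotor_mult semidirect_prod_def U1_pow_def GLZ_def conj_action_def
      using A1 A2
      by (simp add: inv_mult multi_add multi_multi[symmetric] multi_cancel1 multi_imult)
  qed
  have bij: "bij_betw ?f (carrier ?G) (carrier ?P)"
  proof (rule bij_betw_byWitness[where f' = "\<lambda>(C, A). (A, multi C A)"])
    show "\<forall>a\<in>carrier ?G. (\<lambda>(C, A). (A, multi C A)) (?f a) = a"
      by (auto simp: rotor_carrier multi_cancel2)
    show "\<forall>a\<in>carrier ?P. ?f ((\<lambda>(C, A). (A, multi C A)) a) = a"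
      by (auto simp: semidirect_prod_def GLZ_def multi_cancel1)
    show "?f ` carrier ?G \<subseteq> carrier ?P"
      using hom unfolding hom_def by (blast intro: funcset_image)
    show "(\<lambda>(C, A). (A, multi C A)) ` carrier ?P \<subseteq> carrier ?G"
    proof
      fix y assume "y \<in> (\<lambda>(C, A). (A, multi C A)) ` carrier ?P"
      then obtain C A where y: "y = (A, multi C A)" and C: "symt C" and A: "invertible A"
        unfolding semidirect_prod_def U1_pow_def GLZ_def by auto
      have "transpose (imult (transpose A) (multi C A)) = multi (transpose (multi C A)) A"
        by (simp add: transpose_imult)
      also have "\<dots> = multi (imult (transpose A) C) A" by (simp add: transpose_multi C)
      also have "\<dots> = imult (transpose A) (multi C A)" by (simp add: multi_imult)
      finally show "y \<in> carrier ?G" using A y by (simp add: rotor_carrier)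
    qed
  qed
  show "?f \<in> iso ?G ?P" using hom bij unfolding iso_def by simp
qed

theorem theorem1:
  defines "G \<equiv> (rotor_group :: ((int^'n^'n) \<times> (torus^'n^'n)) monoid)"
  shows "group G
    \<and> N_set \<lhd> G
    \<and> G\<lparr>carrier := N_set\<rparr> \<cong> (U1_pow :: (torus^'n^'n) monoid)
    \<and> subgroup H_set G
    \<and> G\<lparr>carrier := H_set\<rparr> \<cong> (GLZ :: (int^'n^'n) monoid)
    \<and> carrier G = H_set <#>\<^bsub>G\<^esub> N_set
    \<and> (\<lambda>A\<in>carrier GLZ. \<lambda>C\<in>carrier U1_pow. conj_action A C)
        \<in> hom (GLZ :: (int^'n^'n) monoid) (AutoGroup (U1_pow :: (torus^'n^'n) monoid))
    \<and> G \<cong> semidirect_prod (U1_pow :: (torus^'n^'n) monoid) (GLZ :: (int^'n^'n) monoid) conj_action"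
    unfolding G_def
  using rotor_group_is_group N_normal N_iso H_subgroup H_iso HN conj_hom semi_iso
  by blast

end
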